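(* Let $\{K_n\}$ be Kraus operators of an incoherent operation with respect to $I$. For every density matrix $\rho$ on $\mathcal H$, setting $p_n=\mathrm{Tr}[K_n\rho K_n^\dagger]$ and $\rho_n=K_n\rho K_n^\dagger/p_n$ for $p_n>0$, we have $$R_I(\rho)\ \ge\ \sum_{n:\,p_n>0}p_n\,R_I(\rho_n).$$
   Context: Fix a Hilbert space $\mathcal H$ of finite dimension $d$ with a fixed orthonormal basis $I=\{|i\rangle\}_{i=1}^d$. The set $\mathcal I$ of incoherent states consists of all density matrices $\sum_{i}p_i|i\rangle\langle i|$ with $p_i\ge0$, $\sum_ip_i=1$. An incoherent operation is a CPTP map $\Phi(\rho)=\sum_nK_n\rho K_n^\dagger$ with $\sum_nK_n^\dagger K_n=\mathbb 1$ such that $K_n\delta K_n^\dagger$ is diagonal in the basis $I$ for every $\delta\in\mathcal I$ and every $n$. For a density matrix $\rho$, let $\rho^{\mathrm{diag}}=\sum_i\langle i|\rho|i\rangle\,|i\rangle\langle i|$. For a pure state $|\psi\rangle=\sum_ia_i|i\rangle$ define $R_I(|\psi\rangle)=S\big((|\psi\rangle\langle\psi|)^{\mathrm{diag}}\big)=-\sum_i|a_i|^2\log_2|a_i|^2$, where $S$ is the von Neumann entropy. For a general density matrix $\rho$ define $R_I(\rho)=\min\sum_ep_eR_I(|\psi_e\rangle)$, the minimum over all finite pure-state decompositions $\rho=\sum_ep_e|\psi_e\rangle\langle\psi_e|$ with $p_e>0$, $\sum_ep_e=1$. *)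

theory Defs
  imports "HOL-Analysis.Analysis" "Jordan_Normal_Form.Schur_Decomposition"
begin

text \<open>Hilbert space C^d with the standard (computational) basis |i>, i < d.
  Operators are d x d complex matrices; the adjoint is mat_adjoint.\<close>

definition mtrace :: "complex mat \<Rightarrow> complex" where
  "mtrace A = (\<Sum>i<dim_row A. A $$ (i,i))"

definition msum :: "nat \<Rightarrow> complex mat list \<Rightarrow> complex mat" where
  "msum d As = foldr (+) As (0\<^sub>m d d)"

definition psd_mat :: "nat \<Rightarrow> complex mat \<Rightarrow> bool" where
  "psd_mat d A \<longleftrightarrow> A \<in> carrier_mat d d \<and>
     (\<forall>v \<in> carrier_vec d. conjugate v \<bullet> (A *\<^sub>v v) \<in> \<real> \<and> Re (conjugate v \<bullet> (A *\<^sub>v v)) \<ge> 0)"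

definition density_mat :: "nat \<Rightarrow> complex mat \<Rightarrow> bool" where
  "density_mat d \<rho> \<longleftrightarrow> psd_mat d \<rho> \<and> mtrace \<rho> = 1"

definition incoherent_state :: "nat \<Rightarrow> complex mat \<Rightarrow> bool" where
  "incoherent_state d \<delta> \<longleftrightarrow> (\<exists>p :: nat \<Rightarrow> real. (\<forall>i<d. p i \<ge> 0) \<and> (\<Sum>i<d. p i) = 1 \<and>
     \<delta> = mat d d (\<lambda>(i,j). if i = j then complex_of_real (p i) else 0))"

definition incoherent_kraus :: "nat \<Rightarrow> complex mat list \<Rightarrow> bool" where
  "incoherent_kraus d Ks \<longleftrightarrow>
     (\<forall>K \<in> set Ks. K \<in> carrier_mat d d) \<and>
     msum d (map (\<lambda>K. mat_adjoint K * K) Ks) = 1\<^sub>m d \<and>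
     (\<forall>K \<in> set Ks. \<forall>\<delta>. incoherent_state d \<delta> \<longrightarrow> diagonal_mat (K * \<delta> * mat_adjoint K))"

definition proj :: "complex vec \<Rightarrow> complex mat" where
  "proj \<psi> = mat (dim_vec \<psi>) (dim_vec \<psi>) (\<lambda>(i,j). \<psi> $ i * cnj (\<psi> $ j))"

definition unit_vec_d :: "nat \<Rightarrow> complex vec \<Rightarrow> bool" where
  "unit_vec_d d \<psi> \<longleftrightarrow> \<psi> \<in> carrier_vec d \<and> (\<Sum>i<d. (cmod (\<psi> $ i))\<^sup>2) = 1"

text \<open>R_I of a pure state: entropy of its diagonal (convention 0 log 0 = 0; note log 2 0 = 0 in HOL).\<close>
definition RI_pure :: "complex vec \<Rightarrow> real" where
  "RI_pure \<psi> = - (\<Sum>i<dim_vec \<psi>. (cmod (\<psi> $ i))\<^sup>2 * log 2 ((cmod (\<psi> $ i))\<^sup>2))"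

definition pure_decomp :: "nat \<Rightarrow> complex mat \<Rightarrow> (real \<times> complex vec) list \<Rightarrow> bool" where
  "pure_decomp d \<rho> D \<longleftrightarrow>
     (\<forall>(p,\<psi>) \<in> set D. p > 0 \<and> unit_vec_d d \<psi>) \<and>
     (\<Sum>(p,\<psi>) \<leftarrow> D. p) = 1 \<and>
     \<rho> = msum d (map (\<lambda>(p,\<psi>). complex_of_real p \<cdot>\<^sub>m proj \<psi>) D)"

definition RI :: "nat \<Rightarrow> complex mat \<Rightarrow> real" where
  "RI d \<rho> = Inf {(\<Sum>(p,\<psi>) \<leftarrow> D. p * RI_pure \<psi>) | D. pure_decomp d \<rho> D}"

end

theory Submission
  imports Defs
begin


lemma msum_carrier_entry:
  assumes "\<forall>A\<in>set As. A \<in> carrier_mat d d"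
  shows "msum d As \<in> carrier_mat d d \<and> (\<forall>i<d. \<forall>j<d. msum d As $$ (i,j) = (\<Sum>A\<leftarrow>As. A $$ (i,j)))"
  using assms by (induction As) (auto simp: msum_def)

lemma adj_carrier: "A \<in> carrier_mat n m \<Longrightarrow> mat_adjoint A \<in> carrier_mat m n"
  by (auto simp: mat_adjoint_def)

lemma adj_index: "A \<in> carrier_mat n m \<Longrightarrow> i < m \<Longrightarrow> j < n \<Longrightarrow> mat_adjoint A $$ (i,j) = cnj (A $$ (j,i))"
  by (auto simp: mat_adjoint_def mat_of_rows_def)

lemma mult_index: "A \<in> carrier_mat n m \<Longrightarrow> B \<in> carrier_mat m p \<Longrightarrow> i<n \<Longrightarrow> j<p \<Longrightarrow> (A*B)$$(i,j) = (\<Sum>k<m. A$$(i,k) * B$$(k,j))"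
  by (auto simp: scalar_prod_def lessThan_atLeast0 intro!: sum.cong)

lemma mult_vec_index: "A \<in> carrier_mat n m \<Longrightarrow> v \<in> carrier_vec m \<Longrightarrow> i<n \<Longrightarrow> (A *\<^sub>v v)$i = (\<Sum>k<m. A$$(i,k) * v$k)"
  by (auto simp: scalar_prod_def lessThan_atLeast0 intro!: sum.cong)

lemma kak_index:
  assumes "A \<in> carrier_mat d d" "B \<in> carrier_mat d d" "C \<in> carrier_mat d d" "j<d" "k<d"
  shows "(A * B * mat_adjoint C) $$ (j,k) = (\<Sum>a<d. \<Sum>b<d. A$$(j,a) * B$$(a,b) * cnj (C$$(k,b)))"
proof -
  have "(A * B * mat_adjoint C) $$ (j,k) = (\<Sum>b<d. (A*B)$$(j,b) * mat_adjoint C $$ (b,k))"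
    using assms by (intro mult_index[of _ d d _ d]) (auto intro: adj_carrier)
  also have "\<dots> = (\<Sum>b<d. (\<Sum>a<d. A$$(j,a) * B$$(a,b)) * cnj (C$$(k,b)))"
    using assms by (intro sum.cong refl) (simp add: mult_index[of A d d B d] adj_index[of C d d] del: index_mult_mat)
  also have "\<dots> = (\<Sum>a<d. \<Sum>b<d. A$$(j,a) * B$$(a,b) * cnj (C$$(k,b)))"
    by (subst sum.swap) (simp add: sum_distrib_right)
  finally show ?thesis .
qed

lemma mtrace_carrier: "A \<in> carrier_mat d d \<Longrightarrow> mtrace A = (\<Sum>i<d. A$$(i,i))"
  by (simp add: mtrace_def)

lemma kraus_carrier: "incoherent_kraus d Ks \<Longrightarrow> n < length Ks \<Longrightarrow> Ks!n \<in> carrier_mat d d"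
  by (auto simp: incoherent_kraus_def)

lemma kraus_col:
  assumes "incoherent_kraus d Ks" "n < length Ks" "i<d" "j<d" "j'<d" "j\<noteq>j'"
  shows "Ks!n $$ (j,i) = 0 \<or> Ks!n $$ (j',i) = 0"
proof -
  let ?K = "Ks!n"
  have K: "?K \<in> carrier_mat d d" using kraus_carrier assms by blast
  define \<delta> where "\<delta> = mat d d (\<lambda>(a,b). if a = b then complex_of_real (if a = i then 1 else 0) else 0)"
  have "incoherent_state d \<delta>" unfolding incoherent_state_def \<delta>_def
    by (rule exI[of _ "\<lambda>a. if a = i then 1 else 0"]) (use assms in auto)
  then have "diagonal_mat (?K * \<delta> * mat_adjoint ?K)" using assms nth_mem unfolding incoherent_kraus_def by blast
  then have "(?K * \<delta> * mat_adjoint ?K) $$ (j,j') = 0" using assms K adj_carrier[OF K] unfolding diagonal_mat_def by auto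
  moreover have "(?K * \<delta> * mat_adjoint ?K) $$ (j,j') = ?K $$ (j,i) * cnj (?K $$ (j',i))"
  proof -
    have "(?K * \<delta> * mat_adjoint ?K) $$ (j,j') = (\<Sum>a<d. \<Sum>b<d. ?K$$(j,a) * \<delta>$$(a,b) * cnj (?K$$(j',b)))"
      using assms K by (intro kak_index) (auto simp: \<delta>_def)
    also have "\<dots> = (\<Sum>a<d. if a = i then ?K$$(j,a) * cnj (?K$$(j',a)) else 0)"
    proof (intro sum.cong refl)
      fix a assume a: "a \<in> {..<d}"
      have "(\<Sum>b<d. ?K$$(j,a) * \<delta>$$(a,b) * cnj (?K$$(j',b))) = (\<Sum>b<d. if b = a then (if a = i then ?K$$(j,a) * cnj (?K$$(j',a)) else 0) else 0)"
        using a by (intro sum.cong refl) (auto simp: \<delta>_def)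
      also have "\<dots> = (if a = i then ?K$$(j,a) * cnj (?K$$(j',a)) else 0)" using a by (simp add: sum.delta')
      finally show "(\<Sum>b<d. ?K$$(j,a) * \<delta>$$(a,b) * cnj (?K$$(j',b))) = (if a = i then ?K$$(j,a) * cnj (?K$$(j',a)) else 0)" .
    qed
    also have "\<dots> = ?K $$ (j,i) * cnj (?K $$ (j',i))" using assms by simp
    finally show ?thesis .
  qed
  ultimately show ?thesis by simp
qed

lemma kraus_complete:
  assumes "incoherent_kraus d Ks" "i<d" "k<d"
  shows "(\<Sum>n<length Ks. \<Sum>j<d. cnj (Ks!n $$ (j,i)) * Ks!n $$ (j,k)) = (if i = k then 1 else 0)"
proof -
  have car: "\<forall>A\<in>set (map (\<lambda>K. mat_adjoint K * K) Ks). A \<in> carrier_mat d d"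
    using assms by (auto simp: incoherent_kraus_def intro!: mult_carrier_mat adj_carrier)
  have "msum d (map (\<lambda>K. mat_adjoint K * K) Ks) $$ (i,k) = 1\<^sub>m d $$ (i,k)"
    using assms by (simp add: incoherent_kraus_def)
  then have "(\<Sum>A\<leftarrow>map (\<lambda>K. mat_adjoint K * K) Ks. A $$ (i,k)) = (if i = k then 1 else 0)"
    using msum_carrier_entry[OF car] assms by simp
  then have "(\<Sum>n<length Ks. (mat_adjoint (Ks!n) * Ks!n) $$ (i,k)) = (if i = k then 1 else 0)"
    by (simp add: sum_list_sum_nth lessThan_atLeast0 o_def)
  moreover have "\<And>n. n < length Ks \<Longrightarrow> (mat_adjoint (Ks!n) * Ks!n) $$ (i,k) = (\<Sum>j<d. cnj (Ks!n $$ (j,i)) * Ks!n $$ (j,k))"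
  proof -
    fix n assume n: "n < length Ks"
    have K: "Ks!n \<in> carrier_mat d d" using kraus_carrier assms n by blast
    show "(mat_adjoint (Ks!n) * Ks!n) $$ (i,k) = (\<Sum>j<d. cnj (Ks!n $$ (j,i)) * Ks!n $$ (j,k))"
      using assms K adj_carrier[OF K] by (simp add: mult_index[of _ d d _ d] adj_index[OF K] del: index_mult_mat)
  qed
  ultimately show ?thesis by simp
qed

lemma swap3: "(\<Sum>j\<in>A. \<Sum>i\<in>B. \<Sum>k\<in>C. f j i k) = (\<Sum>i\<in>B. \<Sum>k\<in>C. \<Sum>j\<in>A. f j i k)"
proof -
  have "(\<Sum>j\<in>A. \<Sum>i\<in>B. \<Sum>k\<in>C. f j i k) = (\<Sum>i\<in>B. \<Sum>j\<in>A. \<Sum>k\<in>C. f j i k)" by (rule sum.swap)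
  also have "\<dots> = (\<Sum>i\<in>B. \<Sum>k\<in>C. \<Sum>j\<in>A. f j i k)" by (intro sum.cong refl) (rule sum.swap)
  finally show ?thesis .
qed

lemma kraus_norm:
  assumes "incoherent_kraus d Ks"
  shows "(\<Sum>n<length Ks. \<Sum>j<d. (cmod (\<Sum>i<d. Ks!n $$ (j,i) * x i))\<^sup>2) = (\<Sum>i<d. (cmod (x i))\<^sup>2)"
proof -
  let ?N = "length Ks"
  have "complex_of_real (\<Sum>n<?N. \<Sum>j<d. (cmod (\<Sum>i<d. Ks!n $$ (j,i) * x i))\<^sup>2)
      = (\<Sum>n<?N. \<Sum>j<d. \<Sum>i<d. \<Sum>k<d. cnj (x i) * x k * (cnj (Ks!n $$ (j,i)) * Ks!n $$ (j,k)))"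
  proof -
    have "\<And>z::complex. complex_of_real ((cmod z)\<^sup>2) = cnj z * z" by (metis complex_norm_square mult.commute)
    then show ?thesis unfolding of_real_sum
      by (intro sum.cong refl) (simp add: sum_product mult_ac, rule sum.swap)
  qed
  also have "\<dots> = (\<Sum>i<d. \<Sum>k<d. cnj (x i) * x k * (\<Sum>n<?N. \<Sum>j<d. cnj (Ks!n $$ (j,i)) * Ks!n $$ (j,k)))"
  proof -
    define F where "F n j i k = cnj (x i) * x k * (cnj (Ks!n $$ (j,i)) * Ks!n $$ (j,k))" for n j i k
    have "(\<Sum>n<?N. \<Sum>j<d. \<Sum>i<d. \<Sum>k<d. F n j i k) = (\<Sum>n<?N. \<Sum>i<d. \<Sum>k<d. \<Sum>j<d. F n j i k)"
      by (rule sum.cong[OF refl], rule swap3)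
    also have "\<dots> = (\<Sum>i<d. \<Sum>k<d. \<Sum>n<?N. \<Sum>j<d. F n j i k)"
      by (rule swap3)
    finally have "(\<Sum>n<?N. \<Sum>j<d. \<Sum>i<d. \<Sum>k<d. cnj (x i) * x k * (cnj (Ks!n $$ (j,i)) * Ks!n $$ (j,k)))
       = (\<Sum>i<d. \<Sum>k<d. \<Sum>n<?N. \<Sum>j<d. cnj (x i) * x k * (cnj (Ks!n $$ (j,i)) * Ks!n $$ (j,k)))" unfolding F_def .
    also have "\<dots> = (\<Sum>i<d. \<Sum>k<d. cnj (x i) * x k * (\<Sum>n<?N. \<Sum>j<d. cnj (Ks!n $$ (j,i)) * Ks!n $$ (j,k)))"
      by (simp add: sum_distrib_left)
    finally show ?thesis .
  qed
  also have "\<dots> = (\<Sum>i<d. \<Sum>k<d. cnj (x i) * x k * (if i = k then 1 else 0))"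
    using kraus_complete[OF assms] by (intro sum.cong refl) simp
  also have "\<dots> = (\<Sum>i<d. cnj (x i) * x i)"
    by (simp add: if_distrib cong: if_cong)
  also have "\<dots> = complex_of_real (\<Sum>i<d. (cmod (x i))\<^sup>2)"
    unfolding of_real_sum complex_norm_square by (simp add: mult.commute)
  finally show ?thesis by (simp only: of_real_eq_iff)
qed



lemma ind_int: "(v::real) \<ge> 0 \<Longrightarrow> ((\<lambda>s. if s \<in> {0..v} then 1 else 0) has_integral v) UNIV"
proof -
  assume v: "v \<ge> 0"
  have "((\<lambda>s. 1::real) has_integral (1 * (v - 0))) {0..v}" using has_integral_const_real[of "1::real" 0 v] v by simp
  then have "((\<lambda>s. 1::real) has_integral v) {0..v}" by simp
  then show ?thesis using has_integral_restrict_UNIV[of "{0..v}" "\<lambda>s. 1::real" v] by simp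
qed

lemma layer_cake:
  fixes m w :: "'a \<Rightarrow> real" and m' u :: "'b \<Rightarrow> real"
  assumes "finite A" "finite B" "\<forall>x\<in>A. w x \<ge> 0" "\<forall>y\<in>B. u y \<ge> 0"
    and le: "\<forall>s\<ge>0. (\<Sum>x\<in>{x\<in>A. s \<le> w x}. m x) \<le> (\<Sum>y\<in>{y\<in>B. s \<le> u y}. m' y)"
  shows "(\<Sum>x\<in>A. m x * w x) \<le> (\<Sum>y\<in>B. m' y * u y)"
proof -
  have iA: "((\<lambda>s. \<Sum>x\<in>A. m x * (if s \<in> {0..w x} then 1 else 0)) has_integral (\<Sum>x\<in>A. m x * w x)) UNIV"
    using assms(3) by (intro has_integral_sum[OF assms(1)] has_integral_mult_right ind_int) auto
  have iB: "((\<lambda>s. \<Sum>y\<in>B. m' y * (if s \<in> {0..u y} then 1 else 0)) has_integral (\<Sum>y\<in>B. m' y * u y)) UNIV"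
    using assms(4) by (intro has_integral_sum[OF assms(2)] has_integral_mult_right ind_int) auto
  show ?thesis
  proof (rule has_integral_le[OF iA iB])
    fix s :: real
    show "(\<Sum>x\<in>A. m x * (if s \<in> {0..w x} then 1 else 0)) \<le> (\<Sum>y\<in>B. m' y * (if s \<in> {0..u y} then 1 else 0))"
    proof (cases "s \<ge> 0")
      case True
      have "(\<Sum>x\<in>A. m x * (if s \<in> {0..w x} then 1 else 0)) = (\<Sum>x\<in>{x\<in>A. s \<le> w x}. m x)"
        using True assms(1) by (simp add: sum.inter_filter[symmetric] if_distrib cong: if_cong)
      moreover have "(\<Sum>y\<in>B. m' y * (if s \<in> {0..u y} then 1 else 0)) = (\<Sum>y\<in>{y\<in>B. s \<le> u y}. m' y)"
        using True assms(2) by (simp add: sum.inter_filter[symmetric] if_distrib cong: if_cong)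
      ultimately show ?thesis using le True by simp
    next
      case False
      then show ?thesis by simp
    qed
  qed
qed

lemma set_bound:
  assumes kraus: "incoherent_kraus d Ks"
  and hyp: "\<forall>n<length Ks. \<forall>j\<in>J n. \<forall>i<d. Ks!n$$(j,i) \<noteq> 0 \<and> x i \<noteq> 0 \<longrightarrow> i \<in> T"
  shows "(\<Sum>n<length Ks. \<Sum>j\<in>{j. j<d \<and> j\<in>J n}. (cmod (\<Sum>i<d. Ks!n$$(j,i) * x i))\<^sup>2)
          \<le> (\<Sum>i\<in>{i. i<d \<and> i\<in>T}. (cmod (x i))\<^sup>2)"
proof -
  define x' where "x' i = (if i \<in> T then x i else 0)" for i
  have eq: "(\<Sum>i<d. Ks!n$$(j,i) * x i) = (\<Sum>i<d. Ks!n$$(j,i) * x' i)" if "n < length Ks" "j \<in> J n" for n j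
    using hyp that unfolding x'_def by (intro sum.cong refl) fastforce
  have "(\<Sum>n<length Ks. \<Sum>j\<in>{j. j<d \<and> j\<in>J n}. (cmod (\<Sum>i<d. Ks!n$$(j,i) * x i))\<^sup>2)
      = (\<Sum>n<length Ks. \<Sum>j\<in>{j. j<d \<and> j\<in>J n}. (cmod (\<Sum>i<d. Ks!n$$(j,i) * x' i))\<^sup>2)"
    using eq by (intro sum.cong refl) auto
  also have "\<dots> \<le> (\<Sum>n<length Ks. \<Sum>j<d. (cmod (\<Sum>i<d. Ks!n$$(j,i) * x' i))\<^sup>2)"
    by (intro sum_mono sum_mono2) auto
  also have "\<dots> = (\<Sum>i<d. (cmod (x' i))\<^sup>2)" by (rule kraus_norm[OF kraus])
  also have "\<dots> = (\<Sum>i\<in>{i. i<d \<and> i\<in>T}. (cmod (x i))\<^sup>2)"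
  proof -
    have "(\<Sum>i<d. (cmod (x' i))\<^sup>2) = (\<Sum>i<d. if i \<in> T then (cmod (x i))\<^sup>2 else 0)"
      unfolding x'_def by (intro sum.cong refl) auto
    also have "\<dots> = (\<Sum>i\<in>{..<d} \<inter> {i. i\<in>T}. (cmod (x i))\<^sup>2)" by (simp add: sum.inter_restrict)
    also have "{..<d} \<inter> {i. i\<in>T} = {i. i<d \<and> i\<in>T}" by auto
    finally show ?thesis by simp
  qed
  finally show ?thesis .
qed

lemma log2_le_lin: "(y::real) > 0 \<Longrightarrow> log 2 y \<le> (y - 1) / ln 2"
  using ln_le_minus_one[of y] by (simp add: log_def divide_right_mono)

lemma pure_ineq:
  assumes kraus: "incoherent_kraus d Ks" and norm: "(\<Sum>i<d. (cmod (x i))\<^sup>2) = 1"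
  defines "b \<equiv> \<lambda>n j. (cmod (\<Sum>i<d. Ks!n$$(j,i) * x i))\<^sup>2"
  defines "q \<equiv> \<lambda>n. \<Sum>j<d. b n j"
  shows "(\<Sum>n\<in>{n. n<length Ks \<and> q n > 0}. \<Sum>j<d. - b n j * log 2 (b n j / q n))
          \<le> (\<Sum>i<d. - (cmod (x i))\<^sup>2 * log 2 ((cmod (x i))\<^sup>2))"
proof -
  define N where "N = length Ks"
  define a where "a i = (cmod (x i))\<^sup>2" for i
  define S where "S n j = {i. i<d \<and> Ks!n$$(j,i) \<noteq> 0}" for n j
  define r where "r n j = Max (insert 0 (a ` S n j))" for n j
  have finS: "finite (S n j)" for n j unfolding S_def by auto
  have a0: "a i \<ge> 0" for i unfolding a_def by simp
  have b0: "b n j \<ge> 0" for n j unfolding b_def by simp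
  have r0: "r n j \<ge> 0" for n j unfolding r_def using finS by (simp add: Max_ge_iff)
  have r_ge: "a i \<le> r n j" if "i \<in> S n j" for n j i
    unfolding r_def using finS that by (intro Max_ge) auto
  have r_le: "r n j \<le> (\<Sum>i\<in>S n j. a i)" for n j
    unfolding r_def using finS a0 by (auto simp: Max_le_iff intro: member_le_sum sum_nonneg)
  have sum_r: "(\<Sum>j<d. r n j) \<le> 1" if n: "n < N" for n
  proof -
    have "(\<Sum>j<d. r n j) \<le> (\<Sum>j<d. \<Sum>i\<in>S n j. a i)" by (intro sum_mono r_le)
    also have "\<dots> = (\<Sum>j<d. \<Sum>i<d. if Ks!n$$(j,i) \<noteq> 0 then a i else 0)"
    proof (rule sum.cong[OF refl])
      fix j have eq: "S n j = {i\<in>{..<d}. Ks!n$$(j,i) \<noteq> 0}" unfolding S_def by auto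
      show "(\<Sum>i\<in>S n j. a i) = (\<Sum>i<d. if Ks!n$$(j,i) \<noteq> 0 then a i else 0)" unfolding eq by (rule sum.inter_filter) simp
    qed
    also have "\<dots> = (\<Sum>i<d. \<Sum>j<d. if Ks!n$$(j,i) \<noteq> 0 then a i else 0)" by (rule sum.swap)
    also have "\<dots> \<le> (\<Sum>i<d. a i)"
    proof (intro sum_mono)
      fix i assume i: "i \<in> {..<d}"
      have "(\<Sum>j<d. if Ks!n$$(j,i) \<noteq> 0 then a i else 0) = (\<Sum>j\<in>{j. j<d \<and> Ks!n$$(j,i) \<noteq> 0}. a i)"
        by (simp add: sum.inter_filter[symmetric])
      also have "\<dots> = real (card {j. j<d \<and> Ks!n$$(j,i) \<noteq> 0}) * a i" by simp
      also have "\<dots> \<le> 1 * a i"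
      proof (intro mult_right_mono a0)
        have "card {j. j<d \<and> Ks!n$$(j,i) \<noteq> 0} \<le> Suc 0"
          using kraus_col[OF kraus, of n i] n i unfolding N_def
          by (subst card_le_Suc0_iff_eq) auto
        then show "real (card {j. j<d \<and> Ks!n$$(j,i) \<noteq> 0}) \<le> 1" by simp
      qed
      finally show "(\<Sum>j<d. if Ks!n$$(j,i) \<noteq> 0 then a i else 0) \<le> a i" by simp
    qed
    also have "\<dots> = 1" using norm unfolding a_def .
    finally show ?thesis .
  qed
  have r_le1: "r n j \<le> 1" if "n < N" "j < d" for n j
  proof -
    have "r n j \<le> (\<Sum>j'<d. r n j')" using r0 that by (intro member_le_sum) auto
    then show ?thesis using sum_r[OF that(1)] by simp
  qed
  have bpos: "\<exists>i\<in>S n j. a i > 0" if "b n j > 0" for n j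
  proof (rule ccontr)
    assume "\<not> (\<exists>i\<in>S n j. a i > 0)"
    then have "\<forall>i<d. Ks!n$$(j,i) * x i = 0" unfolding S_def a_def by auto
    then have "(\<Sum>i<d. Ks!n$$(j,i) * x i) = 0" by (auto intro!: sum.neutral)
    then show False using that unfolding b_def by simp
  qed
  have rpos: "r n j > 0" if "b n j > 0" for n j
    using bpos[OF that] r_ge by fastforce
  have gibbs: "(\<Sum>j<d. - b n j * log 2 (b n j / q n)) \<le> (\<Sum>j<d. b n j * (- log 2 (r n j)))"
    if n: "n < N" and q: "q n > 0" for n
  proof -
    have step: "- b n j * log 2 (b n j / q n) \<le> b n j * (- log 2 (r n j)) + (q n * r n j - b n j) / ln 2" for j
    proof (cases "b n j > 0")
      case True
      have rp: "r n j > 0" using rpos[OF True] .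
      have "- b n j * log 2 (b n j / q n) - b n j * (- log 2 (r n j)) = b n j * log 2 (q n * r n j / b n j)"
        using True rp q by (simp add: log_mult log_divide algebra_simps)
      also have "\<dots> \<le> b n j * ((q n * r n j / b n j - 1) / ln 2)"
        using True rp q by (intro mult_left_mono log2_le_lin) auto
      also have "\<dots> = (q n * r n j - b n j) / ln 2" using True by (simp add: field_simps)
      finally show ?thesis by simp
    next
      case False
      then have "b n j = 0" using b0[of n j] by simp
      then show ?thesis using q r0[of n j] by simp
    qed
    have "(\<Sum>j<d. - b n j * log 2 (b n j / q n)) \<le> (\<Sum>j<d. b n j * (- log 2 (r n j)) + (q n * r n j - b n j) / ln 2)"
      by (intro sum_mono step)
    also have "\<dots> = (\<Sum>j<d. b n j * (- log 2 (r n j))) + (q n * (\<Sum>j<d. r n j) - q n) / ln 2"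
      by (simp add: sum.distrib sum_divide_distrib[symmetric] sum_subtractf sum_distrib_left q_def sum_negf)
    also have "\<dots> \<le> (\<Sum>j<d. b n j * (- log 2 (r n j)))"
    proof -
      have "q n * (\<Sum>j<d. r n j) \<le> q n * 1" using q sum_r[OF n] by (intro mult_left_mono) auto
      then have "(q n * (\<Sum>j<d. r n j) - q n) / ln 2 \<le> 0" by (simp add: divide_le_0_iff)
      then show ?thesis by simp
    qed
    finally show ?thesis .
  qed
  have w0: "- log 2 (r n j) \<ge> 0" if "n < N" "j < d" for n j
  proof (cases "r n j = 0")
    case True then show ?thesis by (simp add: log_def)
  next
    case False
    then have "r n j > 0" using r0[of n j] by simp
    then show ?thesis using r_le1[OF that] by simp
  qed
  have a_le1: "a i \<le> 1" if "i < d" for i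
  proof -
    have "a i \<le> (\<Sum>i'<d. a i')" using a0 that by (intro member_le_sum) auto
    then show ?thesis using norm unfolding a_def by simp
  qed
  have u0: "- log 2 (a i) \<ge> 0" if "i < d" for i
  proof (cases "a i = 0")
    case True then show ?thesis by (simp add: log_def)
  next
    case False
    then have "a i > 0" using a0[of i] by simp
    then show ?thesis using a_le1[OF that] by simp
  qed
  have lc: "(\<Sum>p\<in>{..<N} \<times> {..<d}. (case p of (n,j) \<Rightarrow> b n j) * (case p of (n,j) \<Rightarrow> - log 2 (r n j)))
      \<le> (\<Sum>i\<in>{..<d}. a i * (- log 2 (a i)))"
  proof (rule layer_cake)
    show "\<forall>p\<in>{..<N} \<times> {..<d}. 0 \<le> (case p of (n,j) \<Rightarrow> - log 2 (r n j))" using w0 by auto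
    show "\<forall>i\<in>{..<d}. 0 \<le> - log 2 (a i)" using u0 by auto
    show "\<forall>s\<ge>0. (\<Sum>p\<in>{p \<in> {..<N} \<times> {..<d}. s \<le> (case p of (n,j) \<Rightarrow> - log 2 (r n j))}. case p of (n,j) \<Rightarrow> b n j)
              \<le> (\<Sum>i\<in>{i \<in> {..<d}. s \<le> - log 2 (a i)}. a i)"
    proof (intro allI impI)
      fix s :: real assume s: "s \<ge> 0"
      define J where "J n = {j. s \<le> - log 2 (r n j)}" for n
      define T where "T = {i. s \<le> - log 2 (a i)}"
      have set_eq: "{p \<in> {..<N} \<times> {..<d}. s \<le> (case p of (n,j) \<Rightarrow> - log 2 (r n j))} = Sigma {..<N} (\<lambda>n. {j. j<d \<and> j\<in>J n})"
        unfolding J_def by auto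
      have "(\<Sum>p\<in>{p \<in> {..<N} \<times> {..<d}. s \<le> (case p of (n,j) \<Rightarrow> - log 2 (r n j))}. case p of (n,j) \<Rightarrow> b n j)
          = (\<Sum>n<N. \<Sum>j\<in>{j. j<d \<and> j\<in>J n}. b n j)"
        unfolding set_eq by (subst sum.Sigma) auto
      also have "\<dots> \<le> (\<Sum>i\<in>{i. i<d \<and> i\<in>T}. (cmod (x i))\<^sup>2)"
        unfolding b_def N_def
      proof (rule set_bound[OF kraus])
        show "\<forall>n<length Ks. \<forall>j\<in>J n. \<forall>i<d. Ks ! n $$ (j, i) \<noteq> 0 \<and> x i \<noteq> 0 \<longrightarrow> i \<in> T"
        proof (intro allI impI ballI)
          fix n j i assume n: "n < length Ks" and j: "j \<in> J n" and i: "i < d" and nz: "Ks ! n $$ (j, i) \<noteq> 0 \<and> x i \<noteq> 0"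
          have ai: "a i > 0" using nz unfolding a_def by simp
          have "i \<in> S n j" using i nz unfolding S_def by simp
          then have "a i \<le> r n j" by (rule r_ge)
          then have "log 2 (a i) \<le> log 2 (r n j)" using ai by simp
          then show "i \<in> T" using j unfolding J_def T_def by simp
        qed
      qed
      also have "\<dots> = (\<Sum>i\<in>{i \<in> {..<d}. s \<le> - log 2 (a i)}. a i)"
        unfolding T_def a_def by (intro sum.cong) auto
      finally show "(\<Sum>p\<in>{p \<in> {..<N} \<times> {..<d}. s \<le> (case p of (n,j) \<Rightarrow> - log 2 (r n j))}. case p of (n,j) \<Rightarrow> b n j)
              \<le> (\<Sum>i\<in>{i \<in> {..<d}. s \<le> - log 2 (a i)}. a i)" .
    qed
  qed auto
  have "(\<Sum>n\<in>{n. n<length Ks \<and> q n > 0}. \<Sum>j<d. - b n j * log 2 (b n j / q n))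
      \<le> (\<Sum>n\<in>{n. n<length Ks \<and> q n > 0}. \<Sum>j<d. b n j * (- log 2 (r n j)))"
    by (rule sum_mono) (use gibbs in \<open>auto simp: N_def\<close>)
  also have "\<dots> \<le> (\<Sum>n<N. \<Sum>j<d. b n j * (- log 2 (r n j)))"
    unfolding N_def using b0 w0 N_def by (intro sum_mono2 sum_nonneg mult_nonneg_nonneg) auto
  also have "\<dots> = (\<Sum>p\<in>{..<N} \<times> {..<d}. (case p of (n,j) \<Rightarrow> b n j) * (case p of (n,j) \<Rightarrow> - log 2 (r n j)))"
    by (simp add: sum.cartesian_product split_def)
  also have "\<dots> \<le> (\<Sum>i\<in>{..<d}. a i * (- log 2 (a i)))" by (rule lc)
  also have "\<dots> = (\<Sum>i<d. - (cmod (x i))\<^sup>2 * log 2 ((cmod (x i))\<^sup>2))" unfolding a_def by simp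
  finally show ?thesis .
qed



definition qf :: "nat \<Rightarrow> (nat \<Rightarrow> nat \<Rightarrow> complex) \<Rightarrow> (nat \<Rightarrow> complex) \<Rightarrow> complex" where
  "qf d R x = (\<Sum>a<d. \<Sum>b<d. cnj (x a) * R a b * x b)"

definition psdf :: "nat \<Rightarrow> (nat \<Rightarrow> nat \<Rightarrow> complex) \<Rightarrow> bool" where
  "psdf d R \<longleftrightarrow> (\<forall>x. qf d R x \<in> \<real> \<and> Re (qf d R x) \<ge> 0)"

lemma qf_add:
  assumes t: "t < d"
  shows "qf d R (\<lambda>c. x c + \<beta> * (if c = t then 1 else 0)) = qf d R x + cnj \<beta> * (\<Sum>b<d. R t b * x b)
     + (\<Sum>a<d. cnj (x a) * R a t) * \<beta> + cnj \<beta> * R t t * \<beta>"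
proof -
  define e :: "nat \<Rightarrow> complex" where "e c = (if c = t then 1 else 0)" for c
  have "qf d R (\<lambda>c. x c + \<beta> * e c) = (\<Sum>a<d. \<Sum>b<d. cnj (x a) * R a b * x b + cnj (x a) * R a b * (\<beta> * e b)
      + (cnj \<beta> * e a * R a b * x b + cnj \<beta> * e a * R a b * (\<beta> * e b)))"
    unfolding qf_def by (intro sum.cong refl) (simp add: algebra_simps e_def)
  also have "\<dots> = qf d R x + (\<Sum>a<d. \<Sum>b<d. cnj (x a) * R a b * (\<beta> * e b))
      + ((\<Sum>a<d. \<Sum>b<d. cnj \<beta> * e a * R a b * x b) + (\<Sum>a<d. \<Sum>b<d. cnj \<beta> * e a * R a b * (\<beta> * e b)))"
    unfolding qf_def by (simp add: sum.distrib)
  also have "(\<Sum>a<d. \<Sum>b<d. cnj (x a) * R a b * (\<beta> * e b)) = (\<Sum>a<d. cnj (x a) * R a t) * \<beta>"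
    unfolding sum_distrib_right using t by (intro sum.cong refl) (simp add: e_def if_distrib cong: if_cong)
  also have "(\<Sum>a<d. \<Sum>b<d. cnj \<beta> * e a * R a b * x b) = cnj \<beta> * (\<Sum>b<d. R t b * x b)"
  proof -
    have "(\<Sum>a<d. \<Sum>b<d. cnj \<beta> * e a * R a b * x b) = (\<Sum>a<d. if a = t then cnj \<beta> * (\<Sum>b<d. R t b * x b) else 0)"
      by (intro sum.cong refl) (auto simp: e_def sum_distrib_left mult.assoc)
    then show ?thesis using t by simp
  qed
  also have "(\<Sum>a<d. \<Sum>b<d. cnj \<beta> * e a * R a b * (\<beta> * e b)) = cnj \<beta> * R t t * \<beta>"
  proof -
    have "(\<Sum>a<d. \<Sum>b<d. cnj \<beta> * e a * R a b * (\<beta> * e b)) = (\<Sum>a<d. if a = t then cnj \<beta> * R t t * \<beta> else 0)"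
    proof (intro sum.cong refl)
      fix a assume "a \<in> {..<d}"
      have "(\<Sum>b<d. cnj \<beta> * e a * R a b * (\<beta> * e b)) = (\<Sum>b<d. if b = t then cnj \<beta> * e a * R a t * \<beta> else 0)"
        by (intro sum.cong refl) (auto simp: e_def)
      also have "\<dots> = cnj \<beta> * e a * R a t * \<beta>" using t by simp
      finally show "(\<Sum>b<d. cnj \<beta> * e a * R a b * (\<beta> * e b)) = (if a = t then cnj \<beta> * R t t * \<beta> else 0)"
        by (simp add: e_def)
    qed
    then show ?thesis using t by simp
  qed
  finally show ?thesis unfolding e_def by (simp add: algebra_simps)
qed

lemma qf_zero: "qf d R (\<lambda>c. 0) = 0" by (simp add: qf_def)

lemma qf_single: assumes "t < d" shows "qf d R (\<lambda>c. if c = t then \<beta> else 0) = cnj \<beta> * R t t * \<beta>"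
proof -
  have "(\<lambda>c. if c = t then \<beta> else 0) = (\<lambda>c. (\<lambda>_. 0) c + \<beta> * (if c = t then 1 else 0))" by auto
  then show ?thesis using qf_add[OF assms, of R "\<lambda>_. 0" \<beta>] by (simp add: qf_zero)
qed

lemma qf_two: assumes "a < d" "b < d" "a \<noteq> b"
  shows "qf d R (\<lambda>c. if c = a then \<alpha> else if c = b then \<beta> else 0)
    = cnj \<alpha> * R a a * \<alpha> + cnj \<beta> * (R b a * \<alpha>) + (cnj \<alpha> * R a b) * \<beta> + cnj \<beta> * R b b * \<beta>"
proof -
  have "(\<lambda>c. if c = a then \<alpha> else if c = b then \<beta> else 0) = (\<lambda>c. (\<lambda>c. if c = a then \<alpha> else 0) c + \<beta> * (if c = b then 1 else 0))"
    using assms by auto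
  moreover have "(\<Sum>c<d. R b c * (if c = a then \<alpha> else 0)) = R b a * \<alpha>"
  proof -
    have "(\<Sum>c<d. R b c * (if c = a then \<alpha> else 0)) = (\<Sum>c<d. if c = a then R b a * \<alpha> else 0)"
      by (intro sum.cong refl) auto
    then show ?thesis using assms by simp
  qed
  moreover have "(\<Sum>c<d. cnj (if c = a then \<alpha> else 0) * R c b) = cnj \<alpha> * R a b"
  proof -
    have "(\<Sum>c<d. cnj (if c = a then \<alpha> else 0) * R c b) = (\<Sum>c<d. if c = a then cnj \<alpha> * R a b else 0)"
      by (intro sum.cong refl) auto
    then show ?thesis using assms by simp
  qed
  ultimately show ?thesis using qf_add[OF assms(2), of R "\<lambda>c. if c = a then \<alpha> else 0" \<beta>] qf_single[OF assms(1)]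
    by simp
qed

lemma psdf_diag: assumes "psdf d R" "t < d" shows "R t t \<in> \<real>" "Re (R t t) \<ge> 0"
proof -
  have "qf d R (\<lambda>c. if c = t then 1 else 0) = R t t" using qf_single[OF assms(2), of R 1] by simp
  then show "R t t \<in> \<real>" "Re (R t t) \<ge> 0" using assms(1) unfolding psdf_def by metis+
qed

lemma psdf_herm: assumes "psdf d R" "a < d" "b < d" shows "R a b = cnj (R b a)"
proof (cases "a = b")
  case True
  then show ?thesis using psdf_diag[OF assms(1,2)] by (simp add: Reals_cnj_iff)
next
  case False
  have q1: "qf d R (\<lambda>c. if c = a then 1 else if c = b then 1 else 0) \<in> \<real>" using assms(1) unfolding psdf_def by blast
  have q2: "qf d R (\<lambda>c. if c = a then 1 else if c = b then \<i> else 0) \<in> \<real>" using assms(1) unfolding psdf_def by blast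
  have ra: "Im (R a a) = 0" using psdf_diag[OF assms(1,2)] by (simp add: complex_is_Real_iff)
  have rb: "Im (R b b) = 0" using psdf_diag[OF assms(1,3)] by (simp add: complex_is_Real_iff)
  have e1: "qf d R (\<lambda>c. if c = a then 1 else if c = b then 1 else 0) = R a a + R b a + R a b + R b b"
    unfolding qf_two[OF assms(2,3) False] by simp
  have e2: "qf d R (\<lambda>c. if c = a then 1 else if c = b then \<i> else 0) = R a a - \<i> * R b a + \<i> * R a b + R b b"
    unfolding qf_two[OF assms(2,3) False] by (simp add: algebra_simps)
  from q1 have i1: "Im (R a a) + Im (R b a) + Im (R a b) + Im (R b b) = 0"
    unfolding e1 complex_is_Real_iff by simp
  from q2 have i2: "Im (R a a) - Re (R b a) + Re (R a b) + Im (R b b) = 0"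
    unfolding e2 complex_is_Real_iff by simp
  show ?thesis using i1 i2 ra rb by (intro complex_eqI) auto
qed

lemma psdf_zero_row: assumes "psdf d R" "t < d" "R t t = 0" "b < d" shows "R t b = 0" "R b t = 0"
proof -
  have "R b t = 0"
  proof (cases "b = t")
    case True then show ?thesis using assms by simp
  next
    case False
    show ?thesis
    proof (rule ccontr)
      define z where "z = R b t"
      assume "R b t \<noteq> 0"
      then have zp: "cmod z > 0" unfolding z_def by simp
      define s where "s = (Re (R b b) + 1) / (2 * (cmod z)\<^sup>2)"
      have sp: "s > 0" unfolding s_def using zp psdf_diag[OF assms(1,4)] by (simp add: add_nonneg_pos)
      have herm: "R t b = cnj z" unfolding z_def by (rule psdf_herm[OF assms(1,2,4)])
      define \<beta> where "\<beta> = - of_real s * cnj z"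
      have "qf d R (\<lambda>c. if c = b then 1 else if c = t then \<beta> else 0) = R b b + cnj \<beta> * (R t b) + R b t * \<beta>"
        unfolding qf_two[OF assms(4,2) False] using assms(3) by simp
      also have "\<dots> = R b b - of_real (2 * s * (cmod z)\<^sup>2)"
      proof -
        have nz: "(complex_of_real (cmod z))\<^sup>2 = z * cnj z" by (metis complex_norm_square of_real_power)
        show ?thesis unfolding \<beta>_def herm z_def[symmetric] by (simp add: nz algebra_simps)
      qed
      finally have "Re (R b b) - 2 * s * (cmod z)\<^sup>2 \<ge> 0"
        using assms(1) unfolding psdf_def by (metis minus_complex.sel Re_complex_of_real)
      moreover have "2 * s * (cmod z)\<^sup>2 = Re (R b b) + 1" unfolding s_def using zp by simp
      ultimately show False by simp
    qed
  qed
  then show "R b t = 0" "R t b = 0" using psdf_herm[OF assms(1,2,4)] by auto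
qed

lemma psdf_schur:
  assumes "psdf d R" "t < d" "R t t \<noteq> 0"
  shows "psdf d (\<lambda>a b. R a b - R a t * R t b / R t t)"
  unfolding psdf_def
proof
  fix x
  define \<rho> where "\<rho> = (\<Sum>b<d. R t b * x b)"
  define \<sigma> where "\<sigma> = (\<Sum>a<d. cnj (x a) * R a t)"
  have sr: "\<sigma> = cnj \<rho>"
  proof -
    have "cnj \<rho> = (\<Sum>b<d. cnj (R t b) * cnj (x b))" by (simp add: \<rho>_def)
    also have "\<dots> = \<sigma>" unfolding \<sigma>_def
    proof (intro sum.cong refl)
      fix b assume "b \<in> {..<d}"
      then have "R b t = cnj (R t b)" using psdf_herm[OF assms(1) _ assms(2)] by simp
      then show "cnj (R t b) * cnj (x b) = cnj (x b) * R b t" by simp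
    qed
    finally show ?thesis by simp
  qed
  have rtt: "cnj (R t t) = R t t" using psdf_diag[OF assms(1,2)] by (simp add: Reals_cnj_iff)
  have "qf d (\<lambda>a b. R a b - R a t * R t b / R t t) x = qf d R x - (\<Sum>a<d. \<Sum>b<d. cnj (x a) * R a t * (R t b * x b) / R t t)"
    unfolding qf_def sum_subtractf[symmetric] by (intro sum.cong refl) (simp add: algebra_simps)
  also have "(\<Sum>a<d. \<Sum>b<d. cnj (x a) * R a t * (R t b * x b) / R t t) = \<sigma> * \<rho> / R t t"
    unfolding \<sigma>_def \<rho>_def by (simp add: sum_product sum_divide_distrib)
  finally have e1: "qf d (\<lambda>a b. R a b - R a t * R t b / R t t) x = qf d R x - \<sigma> * \<rho> / R t t" .
  define \<beta> where "\<beta> = - \<rho> / R t t"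
  have "qf d R (\<lambda>c. x c + \<beta> * (if c = t then 1 else 0)) = qf d R x + cnj \<beta> * \<rho> + \<sigma> * \<beta> + cnj \<beta> * R t t * \<beta>"
    unfolding \<rho>_def \<sigma>_def by (rule qf_add[OF assms(2)])
  also have "\<dots> = qf d R x - \<sigma> * \<rho> / R t t"
  proof -
    have cb: "cnj \<beta> = - \<sigma> / R t t" unfolding \<beta>_def sr using rtt by simp
    show ?thesis unfolding cb using assms(3) by (simp add: \<beta>_def field_simps)
  qed
  finally have "qf d (\<lambda>a b. R a b - R a t * R t b / R t t) x = qf d R (\<lambda>c. x c + \<beta> * (if c = t then 1 else 0))"
    using e1 by simp
  then show "qf d (\<lambda>a b. R a b - R a t * R t b / R t t) x \<in> \<real> \<and> 0 \<le> Re (qf d (\<lambda>a b. R a b - R a t * R t b / R t t) x)"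
    using assms(1) unfolding psdf_def by simp
qed

lemma ldl:
  assumes "m \<le> d" "psdf d R" "\<forall>a<d. \<forall>b<d. (a < d - m \<or> b < d - m) \<longrightarrow> R a b = 0"
  shows "\<exists>V. \<forall>a<d. \<forall>b<d. R a b = (\<Sum>v\<leftarrow>V. v a * cnj (v b))"
  using assms
proof (induction m arbitrary: R)
  case 0 then show ?case by (intro exI[of _ "[]"]) auto
next
  case (Suc m)
  define t where "t = d - Suc m"
  have t: "t < d" and tm: "d - m = Suc t" using Suc.prems(1) unfolding t_def by auto
  have z: "\<forall>a<d. \<forall>b<d. (a < t \<or> b < t) \<longrightarrow> R a b = 0" using Suc.prems(3) unfolding t_def by auto
  show ?case
  proof (cases "R t t = 0")
    case True
    have "\<forall>a<d. \<forall>b<d. (a < d - m \<or> b < d - m) \<longrightarrow> R a b = 0"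
      using z psdf_zero_row[OF Suc.prems(2) t True] tm by (auto simp: less_Suc_eq)
    then show ?thesis using Suc.IH[OF _ Suc.prems(2)] Suc.prems(1) by auto
  next
    case False
    define R' where "R' a b = R a b - R a t * R t b / R t t" for a b
    have ps: "psdf d R'" unfolding R'_def by (rule psdf_schur[OF Suc.prems(2) t False])
    have z': "\<forall>a<d. \<forall>b<d. (a < d - m \<or> b < d - m) \<longrightarrow> R' a b = 0"
    proof (intro allI impI)
      fix a b assume a: "a < d" and b: "b < d" and ab: "a < d - m \<or> b < d - m"
      then have "a < t \<or> a = t \<or> b < t \<or> b = t" using tm by auto
      then show "R' a b = 0"
      proof (elim disjE)
        assume "a < t" then show ?thesis using z a b t unfolding R'_def by auto
      next
        assume "a = t" then show ?thesis using False unfolding R'_def by simp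
      next
        assume "b < t" then show ?thesis using z a b t unfolding R'_def by auto
      next
        assume "b = t" then show ?thesis using False unfolding R'_def by simp
      qed
    qed
    obtain V where V: "\<forall>a<d. \<forall>b<d. R' a b = (\<Sum>v\<leftarrow>V. v a * cnj (v b))"
      using Suc.IH[OF _ ps z'] Suc.prems(1) by auto
    define \<tau> where "\<tau> = Re (R t t)"
    have tr: "R t t = complex_of_real \<tau>" unfolding \<tau>_def using psdf_diag(1)[OF Suc.prems(2) t]
      by (simp add: complex_is_Real_iff complex_eq_iff)
    have "\<tau> \<noteq> 0" using False tr by auto
    then have tp: "\<tau> > 0" using psdf_diag(2)[OF Suc.prems(2) t] unfolding \<tau>_def by linarith
    define v where "v a = R a t / complex_of_real (sqrt \<tau>)" for a
    have "\<forall>a<d. \<forall>b<d. R a b = (\<Sum>w\<leftarrow>v#V. w a * cnj (w b))"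
    proof (intro allI impI)
      fix a b assume a: "a < d" and b: "b < d"
      have h: "cnj (R b t) = R t b" using psdf_herm[OF Suc.prems(2) t b] by simp
      have sq: "(complex_of_real (sqrt \<tau>))\<^sup>2 = complex_of_real \<tau>" using tp by (metis of_real_power real_sqrt_pow2 less_imp_le)
      have "v a * cnj (v b) = R a t * R t b / R t t"
        unfolding v_def tr using tp h sq by (simp add: field_simps power2_eq_square[symmetric])
      moreover have "R a b - R a t * R t b / R t t = (\<Sum>v\<leftarrow>V. v a * cnj (v b))" using V a b unfolding R'_def by blast
      ultimately show "R a b = (\<Sum>w\<leftarrow>v#V. w a * cnj (w b))" by (simp add: algebra_simps)
    qed
    then show ?thesis by blast
  qed
qed

lemma psd_psdf: assumes "psd_mat d \<rho>" shows "psdf d (\<lambda>a b. \<rho> $$ (a,b))"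
  unfolding psdf_def
proof
  fix x
  define v :: "complex vec" where "v = vec d x"
  have \<rho>: "\<rho> \<in> carrier_mat d d" using assms unfolding psd_mat_def by simp
  have v: "v \<in> carrier_vec d" unfolding v_def by simp
  have "conjugate v \<bullet> (\<rho> *\<^sub>v v) = (\<Sum>a<d. cnj (x a) * (\<Sum>b<d. \<rho>$$(a,b) * x b))"
    using \<rho> unfolding v_def scalar_prod_def
    by (auto simp: lessThan_atLeast0 scalar_prod_def intro!: sum.cong)
  also have "\<dots> = qf d (\<lambda>a b. \<rho> $$ (a,b)) x" unfolding qf_def by (simp add: sum_distrib_left mult.assoc)
  finally show "qf d (\<lambda>a b. \<rho> $$ (a,b)) x \<in> \<real> \<and> 0 \<le> Re (qf d (\<lambda>a b. \<rho> $$ (a,b)) x)"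
    using assms v unfolding psd_mat_def by metis
qed



lemma sum_list_swap: "(\<Sum>v\<leftarrow>V. \<Sum>i\<in>A. f v i) = (\<Sum>i\<in>A. \<Sum>v\<leftarrow>V. f v i)"
  by (induction V) (auto simp: sum.distrib)

lemma Re_sum_list: "Re (\<Sum>v\<leftarrow>V. f v) = (\<Sum>v\<leftarrow>V. Re (f v))"
  by (induction V) auto

lemma proj_carrier: "dim_vec \<psi> = d \<Longrightarrow> proj \<psi> \<in> carrier_mat d d"
  by (simp add: proj_def)

lemma proj_index: "dim_vec \<psi> = d \<Longrightarrow> a < d \<Longrightarrow> b < d \<Longrightarrow> proj \<psi> $$ (a,b) = \<psi> $ a * cnj (\<psi> $ b)"
  by (simp add: proj_def)

lemma exists_decomp:
  assumes "density_mat d \<rho>"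
  shows "\<exists>D. pure_decomp d \<rho> D"
proof -
  have psd: "psd_mat d \<rho>" and tr: "mtrace \<rho> = 1" using assms unfolding density_mat_def by auto
  have \<rho>c: "\<rho> \<in> carrier_mat d d" using psd unfolding psd_mat_def by simp
  obtain V where V: "\<forall>a<d. \<forall>b<d. \<rho>$$(a,b) = (\<Sum>v\<leftarrow>V. v a * cnj (v b))"
    using ldl[of d d "\<lambda>a b. \<rho>$$(a,b)"] psd_psdf[OF psd] by auto
  define nrm where "nrm v = (\<Sum>i<d. (cmod (v i))\<^sup>2)" for v :: "nat \<Rightarrow> complex"
  define V' where "V' = filter (\<lambda>v. nrm v > 0) V"
  define vn where "vn v = vec d (\<lambda>i. v i / complex_of_real (sqrt (nrm v)))" for v
  define D where "D = map (\<lambda>v. (nrm v, vn v)) V'"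
  have nrm0: "nrm v \<ge> 0" for v unfolding nrm_def by (simp add: sum_nonneg)
  have zero: "v i = 0" if "\<not> nrm v > 0" "i < d" for v i
  proof -
    have "nrm v = 0" using that nrm0[of v] by simp
    then have "\<forall>i\<in>{..<d}. (cmod (v i))\<^sup>2 = 0" unfolding nrm_def by (subst (asm) sum_nonneg_eq_0_iff) auto
    then show ?thesis using that by simp
  qed
  have sq: "(complex_of_real (sqrt (nrm v)))\<^sup>2 = complex_of_real (nrm v)" for v
    using nrm0[of v] by (metis of_real_power real_sqrt_pow2)
  have p1: "\<forall>(p,\<psi>)\<in>set D. p > 0 \<and> unit_vec_d d \<psi>"
  proof
    fix x assume "x \<in> set D"
    then obtain v where v: "v \<in> set V'" and x: "x = (nrm v, vn v)" unfolding D_def by auto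
    have np: "nrm v > 0" using v unfolding V'_def by simp
    have "(\<Sum>i<d. (cmod (vn v $ i))\<^sup>2) = (\<Sum>i<d. (cmod (v i))\<^sup>2 / nrm v)"
      unfolding vn_def using np by (intro sum.cong refl) (simp add: norm_divide power_divide)
    also have "\<dots> = 1" using np by (simp add: sum_divide_distrib[symmetric] nrm_def)
    finally show "case x of (p, \<psi>) \<Rightarrow> 0 < p \<and> unit_vec_d d \<psi>"
      using np unfolding x unit_vec_d_def vn_def by simp
  qed
  have p2: "(\<Sum>(p,\<psi>)\<leftarrow>D. p) = 1"
  proof -
    have "(\<Sum>(p,\<psi>)\<leftarrow>D. p) = (\<Sum>v\<leftarrow>V'. nrm v)" unfolding D_def by (simp add: o_def)
    also have "\<dots> = (\<Sum>v\<leftarrow>V. nrm v)" unfolding V'_def using nrm0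
      by (intro sum_list_map_filter) (metis less_eq_real_def)
    also have "\<dots> = (\<Sum>i<d. \<Sum>v\<leftarrow>V. (cmod (v i))\<^sup>2)" unfolding nrm_def by (rule sum_list_swap)
    also have "\<dots> = (\<Sum>i<d. Re (\<rho>$$(i,i)))"
    proof (intro sum.cong refl)
      fix i assume "i \<in> {..<d}"
      then have "\<rho>$$(i,i) = (\<Sum>v\<leftarrow>V. v i * cnj (v i))" using V by simp
      then have "Re (\<rho>$$(i,i)) = (\<Sum>v\<leftarrow>V. Re (v i * cnj (v i)))" by (simp add: Re_sum_list)
      also have "\<dots> = (\<Sum>v\<leftarrow>V. (cmod (v i))\<^sup>2)"
        by (metis complex_norm_square Re_complex_of_real)
      finally show "(\<Sum>v\<leftarrow>V. (cmod (v i))\<^sup>2) = Re (\<rho>$$(i,i))" by simp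
    qed
    also have "\<dots> = Re (mtrace \<rho>)" using \<rho>c unfolding mtrace_def by simp
    finally show ?thesis using tr by simp
  qed
  have car: "\<forall>A\<in>set (map (\<lambda>(p,\<psi>). complex_of_real p \<cdot>\<^sub>m proj \<psi>) D). A \<in> carrier_mat d d"
    unfolding D_def vn_def by (auto intro!: smult_carrier_mat proj_carrier)
  have p3: "\<rho> = msum d (map (\<lambda>(p,\<psi>). complex_of_real p \<cdot>\<^sub>m proj \<psi>) D)"
  proof (rule eq_matI)
    show "dim_row \<rho> = dim_row (msum d (map (\<lambda>(p,\<psi>). complex_of_real p \<cdot>\<^sub>m proj \<psi>) D))"
      using msum_carrier_entry[OF car] \<rho>c by auto
    show "dim_col \<rho> = dim_col (msum d (map (\<lambda>(p,\<psi>). complex_of_real p \<cdot>\<^sub>m proj \<psi>) D))"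
      using msum_carrier_entry[OF car] \<rho>c by auto
    fix a b assume a: "a < dim_row (msum d (map (\<lambda>(p,\<psi>). complex_of_real p \<cdot>\<^sub>m proj \<psi>) D))"
      and b: "b < dim_col (msum d (map (\<lambda>(p,\<psi>). complex_of_real p \<cdot>\<^sub>m proj \<psi>) D))"
    then have a: "a < d" and b: "b < d" using msum_carrier_entry[OF car] by auto
    have "msum d (map (\<lambda>(p,\<psi>). complex_of_real p \<cdot>\<^sub>m proj \<psi>) D) $$ (a,b)
        = (\<Sum>A\<leftarrow>map (\<lambda>(p,\<psi>). complex_of_real p \<cdot>\<^sub>m proj \<psi>) D. A $$ (a,b))"
      using msum_carrier_entry[OF car] a b by auto
    also have "\<dots> = (\<Sum>v\<leftarrow>V'. (complex_of_real (nrm v) \<cdot>\<^sub>m proj (vn v)) $$ (a,b))"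
      unfolding D_def by (simp add: o_def)
    also have "\<dots> = (\<Sum>v\<leftarrow>V'. v a * cnj (v b))"
    proof (intro arg_cong[where f=sum_list] map_cong refl)
      fix v assume "v \<in> set V'"
      then have np: "nrm v > 0" unfolding V'_def by simp
      have "(complex_of_real (nrm v) \<cdot>\<^sub>m proj (vn v)) $$ (a,b) = complex_of_real (nrm v) * (v a / complex_of_real (sqrt (nrm v))) * cnj (v b / complex_of_real (sqrt (nrm v)))"
        using a b unfolding vn_def by (simp add: proj_def)
      also have "\<dots> = v a * cnj (v b)" using np sq[of v] by (simp add: field_simps power2_eq_square)
      finally show "(complex_of_real (nrm v) \<cdot>\<^sub>m proj (vn v)) $$ (a,b) = v a * cnj (v b)" .
    qed
    also have "\<dots> = (\<Sum>v\<leftarrow>V. v a * cnj (v b))" unfolding V'_def using zero a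
      by (intro sum_list_map_filter) auto
    also have "\<dots> = \<rho> $$ (a,b)" using V a b by simp
    finally show "\<rho> $$ (a,b) = msum d (map (\<lambda>(p,\<psi>). complex_of_real p \<cdot>\<^sub>m proj \<psi>) D) $$ (a,b)" by simp
  qed
  show ?thesis unfolding pure_decomp_def using p1 p2 p3 by blast
qed


lemma RI_pure_nonneg: assumes "unit_vec_d d \<psi>" shows "RI_pure \<psi> \<ge> 0"
proof -
  have dim: "dim_vec \<psi> = d" using assms unfolding unit_vec_d_def by simp
  have "(\<Sum>i<d. (cmod (\<psi> $ i))\<^sup>2 * log 2 ((cmod (\<psi> $ i))\<^sup>2)) \<le> 0"
  proof (intro sum_nonpos)
    fix i assume i: "i \<in> {..<d}"
    have le1: "(cmod (\<psi> $ i))\<^sup>2 \<le> 1"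
    proof -
      have "(cmod (\<psi> $ i))\<^sup>2 \<le> (\<Sum>i<d. (cmod (\<psi> $ i))\<^sup>2)" using i by (intro member_le_sum) auto
      then show ?thesis using assms unfolding unit_vec_d_def by simp
    qed
    show "(cmod (\<psi> $ i))\<^sup>2 * log 2 ((cmod (\<psi> $ i))\<^sup>2) \<le> 0"
    proof (cases "\<psi> $ i = 0")
      case True then show ?thesis by simp
    next
      case False
      then have "(cmod (\<psi> $ i))\<^sup>2 > 0" by simp
      then have "log 2 ((cmod (\<psi> $ i))\<^sup>2) \<le> 0" using le1 by simp
      then show ?thesis by (simp add: mult_nonneg_nonpos)
    qed
  qed
  then show ?thesis unfolding RI_pure_def dim by simp
qed

lemma decomp_entries:
  assumes "pure_decomp d \<rho> D" "a < d" "b < d"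
  shows "\<rho> \<in> carrier_mat d d" "\<rho> $$ (a,b) = (\<Sum>e<length D. complex_of_real (fst (D!e)) * (snd (D!e) $ a * cnj (snd (D!e) $ b)))"
proof -
  have car: "\<forall>A\<in>set (map (\<lambda>(p,\<psi>). complex_of_real p \<cdot>\<^sub>m proj \<psi>) D). A \<in> carrier_mat d d"
    using assms(1) unfolding pure_decomp_def unit_vec_d_def by (auto intro!: smult_carrier_mat proj_carrier)
  have rho: "\<rho> = msum d (map (\<lambda>(p,\<psi>). complex_of_real p \<cdot>\<^sub>m proj \<psi>) D)" using assms(1) unfolding pure_decomp_def by blast
  show "\<rho> \<in> carrier_mat d d" using msum_carrier_entry[OF car] rho by simp
  have "\<rho> $$ (a,b) = (\<Sum>A\<leftarrow>map (\<lambda>(p,\<psi>). complex_of_real p \<cdot>\<^sub>m proj \<psi>) D. A $$ (a,b))"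
    using msum_carrier_entry[OF car] rho assms by simp
  also have "\<dots> = (\<Sum>e<length D. (case D!e of (p,\<psi>) \<Rightarrow> complex_of_real p \<cdot>\<^sub>m proj \<psi>) $$ (a,b))"
    by (simp add: sum_list_sum_nth lessThan_atLeast0)
  also have "\<dots> = (\<Sum>e<length D. complex_of_real (fst (D!e)) * (snd (D!e) $ a * cnj (snd (D!e) $ b)))"
  proof (intro sum.cong refl)
    fix e assume "e \<in> {..<length D}"
    then have "D!e \<in> set D" by simp
    then have "dim_vec (snd (D!e)) = d" using assms(1) unfolding pure_decomp_def unit_vec_d_def by auto
    then show "(case D!e of (p,\<psi>) \<Rightarrow> complex_of_real p \<cdot>\<^sub>m proj \<psi>) $$ (a,b) = complex_of_real (fst (D!e)) * (snd (D!e) $ a * cnj (snd (D!e) $ b))"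
      using assms by (cases "D!e") (simp add: proj_def)
  qed
  finally show "\<rho> $$ (a,b) = (\<Sum>e<length D. complex_of_real (fst (D!e)) * (snd (D!e) $ a * cnj (snd (D!e) $ b)))" .
qed

lemma decomp_carrier: assumes "pure_decomp d \<rho> D" shows "\<rho> \<in> carrier_mat d d"
proof -
  have car: "\<forall>A\<in>set (map (\<lambda>(p,\<psi>). complex_of_real p \<cdot>\<^sub>m proj \<psi>) D). A \<in> carrier_mat d d"
    using assms(1) unfolding pure_decomp_def unit_vec_d_def by (auto intro!: smult_carrier_mat proj_carrier)
  have rho: "\<rho> = msum d (map (\<lambda>(p,\<psi>). complex_of_real p \<cdot>\<^sub>m proj \<psi>) D)" using assms(1) unfolding pure_decomp_def by blast
  show ?thesis using msum_carrier_entry[OF car] rho by simp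
qed

lemma kraus_conj_entries:
  assumes "pure_decomp d \<rho> D" "K \<in> carrier_mat d d" "j < d" "k < d"
  shows "(K * \<rho> * mat_adjoint K) $$ (j,k) = (\<Sum>e<length D. complex_of_real (fst (D!e)) *
      ((\<Sum>a<d. K$$(j,a) * snd (D!e) $ a) * cnj (\<Sum>b<d. K$$(k,b) * snd (D!e) $ b)))"
proof -
  have \<rho>: "\<rho> \<in> carrier_mat d d" using decomp_carrier[OF assms(1)] .
  define F where "F a b e = K$$(j,a) * (complex_of_real (fst (D!e)) * (snd (D!e) $ a * cnj (snd (D!e) $ b))) * cnj (K$$(k,b))" for a b e
  have "(K * \<rho> * mat_adjoint K) $$ (j,k) = (\<Sum>a<d. \<Sum>b<d. K$$(j,a) * \<rho>$$(a,b) * cnj (K$$(k,b)))"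
    using kak_index[OF assms(2) \<rho> assms(2,3,4)] .
  also have "\<dots> = (\<Sum>a<d. \<Sum>b<d. \<Sum>e<length D. F a b e)"
    unfolding F_def by (intro sum.cong refl) (simp add: decomp_entries(2)[OF assms(1)] sum_distrib_left sum_distrib_right)
  also have "\<dots> = (\<Sum>e<length D. \<Sum>a<d. \<Sum>b<d. F a b e)"
    using swap3[where f="\<lambda>e a b. F a b e" and A="{..<length D}" and B="{..<d}" and C="{..<d}"] by simp
  also have "\<dots> = (\<Sum>e<length D. complex_of_real (fst (D!e)) *
      ((\<Sum>a<d. K$$(j,a) * snd (D!e) $ a) * cnj (\<Sum>b<d. K$$(k,b) * snd (D!e) $ b)))"
    unfolding F_def by (intro sum.cong refl) (simp add: sum_product sum_distrib_left mult_ac, rule sum.swap)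
  finally show ?thesis .
qed


lemma sum_filter_lt: "(\<Sum>x\<in>{x. x<(m::nat) \<and> P x}. f x) = (\<Sum>x<m. if P x then f x else 0)"
proof -
  have "(\<Sum>x<m. if P x then f x else 0) = (\<Sum>x<m. if x \<in> {x. P x} then f x else 0)" by simp
  also have "\<dots> = sum f ({..<m} \<inter> {x. P x})" by (rule sum.inter_restrict[symmetric]) simp
  also have "{..<m} \<inter> {x. P x} = {x. x<m \<and> P x}" by auto
  finally show ?thesis by simp
qed

lemma main_bound:
  assumes kraus: "incoherent_kraus d Ks" and D: "pure_decomp d \<rho> D"
  shows "(\<Sum>n \<in> {n. n < length Ks \<and> Re (mtrace (Ks!n * \<rho> * mat_adjoint (Ks!n))) > 0}.
       Re (mtrace (Ks!n * \<rho> * mat_adjoint (Ks!n))) *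
       RI d (complex_of_real (1 / Re (mtrace (Ks!n * \<rho> * mat_adjoint (Ks!n))))
               \<cdot>\<^sub>m (Ks!n * \<rho> * mat_adjoint (Ks!n))))
     \<le> (\<Sum>(p,\<psi>)\<leftarrow>D. p * RI_pure \<psi>)"
proof -
  define N where "N = length Ks"
  define E where "E = length D"
  define pe where "pe e = fst (D!e)" for e
  define ps where "ps e = snd (D!e)" for e
  define c where "c n e j = (\<Sum>a<d. Ks!n$$(j,a) * ps e $ a)" for n e j
  define q where "q n e = (\<Sum>j<d. (cmod (c n e j))\<^sup>2)" for n e
  define M where "M n = Ks!n * \<rho> * mat_adjoint (Ks!n)" for n
  define P where "P n = Re (mtrace (M n))" for n
  define \<phi> where "\<phi> n e = vec d (\<lambda>j. c n e j / complex_of_real (sqrt (q n e)))" for n e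
  have De: "pe e > 0 \<and> unit_vec_d d (ps e)" if "e < E" for e
  proof -
    have "D!e \<in> set D" using that unfolding E_def by simp
    moreover have "\<forall>x\<in>set D. case x of (p,\<psi>) \<Rightarrow> 0 < p \<and> unit_vec_d d \<psi>" using D unfolding pure_decomp_def by (rule conjunct1)
    ultimately have "case D!e of (p,\<psi>) \<Rightarrow> 0 < p \<and> unit_vec_d d \<psi>" by (rule bspec[rotated])
    then show ?thesis unfolding pe_def ps_def by (simp add: split_def)
  qed
  have pe_sum: "(\<Sum>e<E. pe e) = 1"
  proof -
    have "(\<Sum>(p,\<psi>)\<leftarrow>D. p) = 1" using D unfolding pure_decomp_def by blast
    then show ?thesis unfolding E_def pe_def by (simp add: sum_list_sum_nth lessThan_atLeast0 split_def)
  qed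
  have \<rho>c: "\<rho> \<in> carrier_mat d d" using decomp_carrier[OF D] .
  have Kc: "Ks!n \<in> carrier_mat d d" if "n < N" for n using kraus_carrier[OF kraus] that unfolding N_def by blast
  have Mc: "M n \<in> carrier_mat d d" if "n < N" for n
    unfolding M_def using Kc[OF that] \<rho>c by (intro mult_carrier_mat adj_carrier) auto
  have M_entry: "M n $$ (j,k) = (\<Sum>e<E. complex_of_real (pe e) * (c n e j * cnj (c n e k)))"
    if "n < N" "j < d" "k < d" for n j k
    unfolding M_def c_def pe_def ps_def E_def using kraus_conj_entries[OF D Kc[OF that(1)] that(2,3)] by simp
  have q0: "q n e \<ge> 0" for n e unfolding q_def by (simp add: sum_nonneg)
  have c_zero: "c n e j = 0" if "\<not> q n e > 0" "j < d" for n e j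
  proof -
    have "q n e = 0" using that q0[of n e] by simp
    then have "\<forall>j\<in>{..<d}. (cmod (c n e j))\<^sup>2 = 0" unfolding q_def by (subst (asm) sum_nonneg_eq_0_iff) auto
    then show ?thesis using that by simp
  qed
  have P_eq: "P n = (\<Sum>e<E. pe e * q n e)" if n: "n < N" for n
  proof -
    have "P n = (\<Sum>j<d. Re (M n $$ (j,j)))" unfolding P_def mtrace_def using Mc[OF n] by simp
    also have "\<dots> = (\<Sum>j<d. \<Sum>e<E. pe e * (cmod (c n e j))\<^sup>2)"
    proof (intro sum.cong refl)
      fix j assume "j \<in> {..<d}"
      then have "M n $$ (j,j) = (\<Sum>e<E. complex_of_real (pe e) * (c n e j * cnj (c n e j)))" using M_entry n by simp
      also have "\<dots> = (\<Sum>e<E. complex_of_real (pe e * (cmod (c n e j))\<^sup>2))"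
      proof (intro sum.cong refl)
        fix e
        have "c n e j * cnj (c n e j) = complex_of_real ((cmod (c n e j))\<^sup>2)" by (metis complex_norm_square)
        then show "complex_of_real (pe e) * (c n e j * cnj (c n e j)) = complex_of_real (pe e * (cmod (c n e j))\<^sup>2)" by simp
      qed
      finally show "Re (M n $$ (j,j)) = (\<Sum>e<E. pe e * (cmod (c n e j))\<^sup>2)" by simp
    qed
    also have "\<dots> = (\<Sum>e<E. pe e * q n e)" unfolding q_def sum_distrib_left by (rule sum.swap)
    finally show ?thesis .
  qed
  have phi_unit: "unit_vec_d d (\<phi> n e)" if "q n e > 0" for n e
  proof -
    have "(\<Sum>j<d. (cmod (\<phi> n e $ j))\<^sup>2) = (\<Sum>j<d. (cmod (c n e j))\<^sup>2 / q n e)"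
      unfolding \<phi>_def using that by (intro sum.cong refl) (simp add: norm_divide power_divide)
    also have "\<dots> = 1" using that by (simp add: sum_divide_distrib[symmetric] q_def)
    finally show ?thesis unfolding unit_vec_d_def \<phi>_def by simp
  qed
  have RI_bound: "RI d (complex_of_real (1 / P n) \<cdot>\<^sub>m M n) \<le> (\<Sum>e\<in>{e. e < E \<and> q n e > 0}. pe e * q n e / P n * RI_pure (\<phi> n e))"
    if n: "n < N" and Pp: "P n > 0" for n
  proof -
    define Dn where "Dn = map (\<lambda>e. (pe e * q n e / P n, \<phi> n e)) (filter (\<lambda>e. q n e > 0) [0..<E])"
    have d1: "\<forall>(p,\<psi>)\<in>set Dn. p > 0 \<and> unit_vec_d d \<psi>"
    proof
      fix x assume "x \<in> set Dn"
      then obtain e where e: "e < E" "q n e > 0" and x: "x = (pe e * q n e / P n, \<phi> n e)" unfolding Dn_def by auto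
      have "pe e * q n e / P n > 0" using De[OF e(1)] e(2) Pp by simp
      then show "case x of (p,\<psi>) \<Rightarrow> p > 0 \<and> unit_vec_d d \<psi>" using phi_unit[OF e(2)] x by simp
    qed
    have d2: "(\<Sum>(p,\<psi>)\<leftarrow>Dn. p) = 1"
    proof -
      have "(\<Sum>(p,\<psi>)\<leftarrow>Dn. p) = (\<Sum>e\<leftarrow>filter (\<lambda>e. q n e > 0) [0..<E]. pe e * q n e / P n)"
        unfolding Dn_def by (simp add: o_def)
      also have "\<dots> = (\<Sum>e\<leftarrow>[0..<E]. pe e * q n e / P n)"
      proof (rule sum_list_map_filter)
        fix e assume "\<not> q n e > 0"
        then have "q n e = 0" using q0[of n e] by simp
        then show "pe e * q n e / P n = 0" by simp
      qed
      also have "\<dots> = (\<Sum>e<E. pe e * q n e) / P n"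
        by (simp add: interv_sum_list_conv_sum_set_nat atLeast0LessThan sum_divide_distrib)
      also have "\<dots> = 1" using P_eq[OF n] Pp by simp
      finally show ?thesis .
    qed
    have car: "\<forall>A\<in>set (map (\<lambda>(p,\<psi>). complex_of_real p \<cdot>\<^sub>m proj \<psi>) Dn). A \<in> carrier_mat d d"
      unfolding Dn_def \<phi>_def by (auto intro!: smult_carrier_mat proj_carrier)
    have d3: "complex_of_real (1 / P n) \<cdot>\<^sub>m M n = msum d (map (\<lambda>(p,\<psi>). complex_of_real p \<cdot>\<^sub>m proj \<psi>) Dn)"
    proof (rule eq_matI)
      show "dim_row (complex_of_real (1 / P n) \<cdot>\<^sub>m M n) = dim_row (msum d (map (\<lambda>(p,\<psi>). complex_of_real p \<cdot>\<^sub>m proj \<psi>) Dn))"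
        using msum_carrier_entry[OF car] Mc[OF n] by auto
      show "dim_col (complex_of_real (1 / P n) \<cdot>\<^sub>m M n) = dim_col (msum d (map (\<lambda>(p,\<psi>). complex_of_real p \<cdot>\<^sub>m proj \<psi>) Dn))"
        using msum_carrier_entry[OF car] Mc[OF n] by auto
      fix j k assume j: "j < dim_row (msum d (map (\<lambda>(p,\<psi>). complex_of_real p \<cdot>\<^sub>m proj \<psi>) Dn))"
        and k: "k < dim_col (msum d (map (\<lambda>(p,\<psi>). complex_of_real p \<cdot>\<^sub>m proj \<psi>) Dn))"
      then have j: "j < d" and k: "k < d" using msum_carrier_entry[OF car] by auto
      have "msum d (map (\<lambda>(p,\<psi>). complex_of_real p \<cdot>\<^sub>m proj \<psi>) Dn) $$ (j,k)
          = (\<Sum>A\<leftarrow>map (\<lambda>(p,\<psi>). complex_of_real p \<cdot>\<^sub>m proj \<psi>) Dn. A $$ (j,k))"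
        using msum_carrier_entry[OF car] j k by auto
      also have "\<dots> = (\<Sum>e\<leftarrow>filter (\<lambda>e. q n e > 0) [0..<E]. (complex_of_real (pe e * q n e / P n) \<cdot>\<^sub>m proj (\<phi> n e)) $$ (j,k))"
        unfolding Dn_def by (simp add: o_def)
      also have "\<dots> = (\<Sum>e\<leftarrow>filter (\<lambda>e. q n e > 0) [0..<E]. complex_of_real (pe e / P n) * (c n e j * cnj (c n e k)))"
      proof (intro arg_cong[where f=sum_list] map_cong refl)
        fix e assume "e \<in> set (filter (\<lambda>e. q n e > 0) [0..<E])"
        then have qp: "q n e > 0" by simp
        have sq: "(complex_of_real (sqrt (q n e)))\<^sup>2 = complex_of_real (q n e)"
          using qp by (metis of_real_power real_sqrt_pow2 less_imp_le)
        have "(complex_of_real (pe e * q n e / P n) \<cdot>\<^sub>m proj (\<phi> n e)) $$ (j,k)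
            = complex_of_real (pe e * q n e / P n) * (c n e j / complex_of_real (sqrt (q n e))) * cnj (c n e k / complex_of_real (sqrt (q n e)))"
          using j k unfolding \<phi>_def by (simp add: proj_def mult_ac)
        also have "\<dots> = complex_of_real (pe e * q n e / P n) * (c n e j * cnj (c n e k)) / (complex_of_real (sqrt (q n e)))\<^sup>2"
          by (simp add: power2_eq_square mult_ac)
        also have "\<dots> = complex_of_real (pe e * q n e / P n) * (c n e j * cnj (c n e k)) / complex_of_real (q n e)"
          by (simp only: sq)
        also have "\<dots> = complex_of_real (pe e * q n e / P n / q n e) * (c n e j * cnj (c n e k))"
          by simp
        also have "pe e * q n e / P n / q n e = pe e / P n" using qp by simp
        finally show "(complex_of_real (pe e * q n e / P n) \<cdot>\<^sub>m proj (\<phi> n e)) $$ (j,k) = complex_of_real (pe e / P n) * (c n e j * cnj (c n e k))" .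
      qed
      also have "\<dots> = (\<Sum>e\<leftarrow>[0..<E]. complex_of_real (pe e / P n) * (c n e j * cnj (c n e k)))"
        using c_zero j by (intro sum_list_map_filter) auto
      also have "\<dots> = complex_of_real (1 / P n) * (\<Sum>e<E. complex_of_real (pe e) * (c n e j * cnj (c n e k)))"
        by (simp add: interv_sum_list_conv_sum_set_nat atLeast0LessThan sum_distrib_left)
      also have "\<dots> = (complex_of_real (1 / P n) \<cdot>\<^sub>m M n) $$ (j,k)"
        using M_entry[OF n j k] Mc[OF n] j k by simp
      finally show "(complex_of_real (1 / P n) \<cdot>\<^sub>m M n) $$ (j,k) = msum d (map (\<lambda>(p,\<psi>). complex_of_real p \<cdot>\<^sub>m proj \<psi>) Dn) $$ (j,k)"
        by simp
    qed
    have dec: "pure_decomp d (complex_of_real (1 / P n) \<cdot>\<^sub>m M n) Dn"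
      unfolding pure_decomp_def using d1 d2 d3 by blast
    have val: "(\<Sum>(p,\<psi>)\<leftarrow>Dn. p * RI_pure \<psi>) = (\<Sum>e\<in>{e. e < E \<and> q n e > 0}. pe e * q n e / P n * RI_pure (\<phi> n e))"
    proof -
      have "(\<Sum>(p,\<psi>)\<leftarrow>Dn. p * RI_pure \<psi>) = (\<Sum>e\<leftarrow>filter (\<lambda>e. q n e > 0) [0..<E]. pe e * q n e / P n * RI_pure (\<phi> n e))"
        unfolding Dn_def by (simp add: o_def)
      also have "\<dots> = (\<Sum>e\<in>set (filter (\<lambda>e. q n e > 0) [0..<E]). pe e * q n e / P n * RI_pure (\<phi> n e))"
        by (rule sum_list_distinct_conv_sum_set) simp
      also have "set (filter (\<lambda>e. q n e > 0) [0..<E]) = {e. e < E \<and> q n e > 0}" by auto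
      finally show ?thesis .
    qed
    have bdd: "bdd_below {(\<Sum>(p,\<psi>)\<leftarrow>D'. p * RI_pure \<psi>) | D'. pure_decomp d (complex_of_real (1 / P n) \<cdot>\<^sub>m M n) D'}"
    proof (rule bdd_belowI[of _ 0])
      fix x assume "x \<in> {(\<Sum>(p,\<psi>)\<leftarrow>D'. p * RI_pure \<psi>) | D'. pure_decomp d (complex_of_real (1 / P n) \<cdot>\<^sub>m M n) D'}"
      then obtain D' where x: "x = (\<Sum>(p,\<psi>)\<leftarrow>D'. p * RI_pure \<psi>)" and D': "pure_decomp d (complex_of_real (1 / P n) \<cdot>\<^sub>m M n) D'" by blast
      have "\<forall>y\<in>set D'. 0 \<le> (case y of (p,\<psi>) \<Rightarrow> p * RI_pure \<psi>)"
        using D' RI_pure_nonneg unfolding pure_decomp_def by fastforce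
      then show "0 \<le> x" unfolding x by (intro sum_list_nonneg) auto
    qed
    have "RI d (complex_of_real (1 / P n) \<cdot>\<^sub>m M n) \<le> (\<Sum>(p,\<psi>)\<leftarrow>Dn. p * RI_pure \<psi>)"
      unfolding RI_def using dec by (intro cInf_lower[OF _ bdd]) blast
    then show ?thesis unfolding val .
  qed
  have PL: "(\<Sum>n\<in>{n. n<N \<and> q n e > 0}. q n e * RI_pure (\<phi> n e)) \<le> RI_pure (ps e)" if e: "e < E" for e
  proof -
    have unit: "unit_vec_d d (ps e)" using De[OF e] by simp
    have norm: "(\<Sum>i<d. (cmod (ps e $ i))\<^sup>2) = 1" using unit unfolding unit_vec_d_def by simp
    have eqn: "q n e * RI_pure (\<phi> n e) = (\<Sum>j<d. - (cmod (c n e j))\<^sup>2 * log 2 ((cmod (c n e j))\<^sup>2 / q n e))"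
      if "q n e > 0" for n
    proof -
      have "RI_pure (\<phi> n e) = - (\<Sum>j<d. ((cmod (c n e j))\<^sup>2 / q n e) * log 2 ((cmod (c n e j))\<^sup>2 / q n e))"
        unfolding RI_pure_def \<phi>_def using that by (simp add: norm_divide power_divide)
      then show ?thesis using that by (simp add: sum_distrib_left sum_negf)
    qed
    have "(\<Sum>n\<in>{n. n<N \<and> q n e > 0}. q n e * RI_pure (\<phi> n e))
        = (\<Sum>n\<in>{n. n<length Ks \<and> q n e > 0}. \<Sum>j<d. - (cmod (c n e j))\<^sup>2 * log 2 ((cmod (c n e j))\<^sup>2 / q n e))"
      unfolding N_def using eqn by (intro sum.cong refl) auto
    also have "\<dots> \<le> (\<Sum>i<d. - (cmod (ps e $ i))\<^sup>2 * log 2 ((cmod (ps e $ i))\<^sup>2))"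
      using pure_ineq[OF kraus norm] unfolding c_def q_def by simp
    also have "\<dots> = RI_pure (ps e)"
    proof -
      have dim: "dim_vec (ps e) = d" using unit unfolding unit_vec_d_def by auto
      show ?thesis unfolding RI_pure_def dim by (simp add: sum_negf)
    qed
    finally show ?thesis .
  qed
  define T where "T n = (\<Sum>e\<in>{e. e<E \<and> q n e > 0}. pe e * (q n e * RI_pure (\<phi> n e)))" for n
  have T0: "T n \<ge> 0" for n
    unfolding T_def
  proof (intro sum_nonneg)
    fix e assume "e \<in> {e. e<E \<and> q n e > 0}"
    then show "0 \<le> pe e * (q n e * RI_pure (\<phi> n e))"
      using De[of e] RI_pure_nonneg[OF phi_unit[of n e]] by (auto intro!: mult_nonneg_nonneg)
  qed
  have "(\<Sum>n\<in>{n. n<N \<and> P n > 0}. P n * RI d (complex_of_real (1 / P n) \<cdot>\<^sub>m M n))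
      \<le> (\<Sum>n\<in>{n. n<N \<and> P n > 0}. T n)"
  proof (rule sum_mono)
    fix n assume "n \<in> {n. n<N \<and> P n > 0}"
    then have n: "n < N" and Pp: "P n > 0" by auto
    have "P n * RI d (complex_of_real (1 / P n) \<cdot>\<^sub>m M n) \<le> P n * (\<Sum>e\<in>{e. e < E \<and> q n e > 0}. pe e * q n e / P n * RI_pure (\<phi> n e))"
      using RI_bound[OF n Pp] Pp by (intro mult_left_mono) auto
    also have "\<dots> = T n" unfolding T_def sum_distrib_left using Pp by (intro sum.cong refl) simp
    finally show "P n * RI d (complex_of_real (1 / P n) \<cdot>\<^sub>m M n) \<le> T n" .
  qed
  also have "\<dots> \<le> (\<Sum>n<N. T n)" using T0 by (intro sum_mono2) auto
  also have "\<dots> = (\<Sum>n<N. \<Sum>e<E. if q n e > 0 then pe e * (q n e * RI_pure (\<phi> n e)) else 0)"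
    unfolding T_def sum_filter_lt ..
  also have "\<dots> = (\<Sum>e<E. \<Sum>n<N. if q n e > 0 then pe e * (q n e * RI_pure (\<phi> n e)) else 0)"
    by (rule sum.swap)
  also have "\<dots> = (\<Sum>e<E. pe e * (\<Sum>n\<in>{n. n<N \<and> q n e > 0}. q n e * RI_pure (\<phi> n e)))"
    unfolding sum_filter_lt sum_distrib_left by (intro sum.cong refl) simp
  also have "\<dots> \<le> (\<Sum>e<E. pe e * RI_pure (ps e))"
    using PL De by (intro sum_mono mult_left_mono) (auto simp: less_imp_le)
  also have "\<dots> = (\<Sum>(p,\<psi>)\<leftarrow>D. p * RI_pure \<psi>)"
    unfolding E_def pe_def ps_def by (simp add: sum_list_sum_nth lessThan_atLeast0 split_def)
  finally show ?thesis unfolding P_def M_def N_def .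
qed


theorem mainTheorem3:
  fixes d :: nat and Ks :: "complex mat list" and \<rho> :: "complex mat"
  assumes "incoherent_kraus d Ks"
    and "density_mat d \<rho>"
  shows "RI d \<rho> \<ge>
    (\<Sum>n \<in> {n. n < length Ks \<and> Re (mtrace (Ks!n * \<rho> * mat_adjoint (Ks!n))) > 0}.
       Re (mtrace (Ks!n * \<rho> * mat_adjoint (Ks!n))) *
       RI d (complex_of_real (1 / Re (mtrace (Ks!n * \<rho> * mat_adjoint (Ks!n))))
               \<cdot>\<^sub>m (Ks!n * \<rho> * mat_adjoint (Ks!n))))"
proof -
  have ne: "{(\<Sum>(p,\<psi>)\<leftarrow>D. p * RI_pure \<psi>) | D. pure_decomp d \<rho> D} \<noteq> {}"
    using exists_decomp[OF assms(2)] by blast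
  have eq: "RI d \<rho> = Inf {(\<Sum>(p,\<psi>)\<leftarrow>D. p * RI_pure \<psi>) | D. pure_decomp d \<rho> D}"
    unfolding RI_def ..
  show ?thesis unfolding eq
  proof (rule cInf_greatest[OF ne])
    fix x assume "x \<in> {(\<Sum>(p,\<psi>)\<leftarrow>D. p * RI_pure \<psi>) | D. pure_decomp d \<rho> D}"
    then obtain D where x: "x = (\<Sum>(p,\<psi>)\<leftarrow>D. p * RI_pure \<psi>)" and D: "pure_decomp d \<rho> D" by blast
    show "(\<Sum>n \<in> {n. n < length Ks \<and> Re (mtrace (Ks!n * \<rho> * mat_adjoint (Ks!n))) > 0}.
       Re (mtrace (Ks!n * \<rho> * mat_adjoint (Ks!n))) *
       RI d (complex_of_real (1 / Re (mtrace (Ks!n * \<rho> * mat_adjoint (Ks!n))))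
               \<cdot>\<^sub>m (Ks!n * \<rho> * mat_adjoint (Ks!n)))) \<le> x"
      unfolding x by (rule main_bound[OF assms(1) D])
  qed
qed

end
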